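(* Let $G$ be a connected graph with $n$ nodes and $v(0)\in\mathbb R^n$ arbitrary. Then for every $t\ge0$, $$\mathbb E\|v(t)-\bar v\|_1\;\le\;\Big(1-\frac1{2\gamma(G)}\Big)^{t/2}\sqrt n\,\|v(0)-\bar v\|_2 .$$ Furthermore, $$\sup_{\|v(0)\|_2=1}\mathbb E\|v(t)-\bar v\|_1\;\ge\;\Big(1-\frac1{2\gamma(G)}\Big)^{t}.$$
   Context: The averaging process on a finite, undirected, connected graph $G=(V,E)$, $V=\{1,\dots,n\}$: the state vector $v(t)\in\mathbb R^n$, $t=0,1,2,\dots$, starts from a given $v(0)$; at each step $t\ge 1$ an edge $\{i,j\}\in E$ is chosen uniformly at random (independently of all previous choices) and both $v_i$ and $v_j$ are replaced by $(v_i+v_j)/2$, all other coordinates unchanged. $\bar v=(a,\dots,a)^T$ with $a=\frac1n\sum_i v_i(0)$. $L=D-A$ is the graph Laplacian, $\lambda_2(G)$ its second smallest eigenvalue, $\gamma(G)=|E|/\lambda_2(G)$. *)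

theory Defs
  imports "HOL-Probability.Probability_Mass_Function" "Jordan_Normal_Form.Char_Poly"
begin

definition simple_graph :: "nat \<Rightarrow> nat set set \<Rightarrow> bool" where
  "simple_graph n E \<longleftrightarrow> (\<forall>e\<in>E. e \<subseteq> {0..<n} \<and> card e = 2)"

definition connected_graph :: "nat \<Rightarrow> nat set set \<Rightarrow> bool" where
  "connected_graph n E \<longleftrightarrow>
     (\<forall>i<n. \<forall>j<n. (\<lambda>x y. {x, y} \<in> E)\<^sup>*\<^sup>* i j)"

definition degree :: "nat set set \<Rightarrow> nat \<Rightarrow> nat" where
  "degree E i = card {j. {i, j} \<in> E}"

definition laplacian :: "nat \<Rightarrow> nat set set \<Rightarrow> real mat" where
  "laplacian n E = mat n n (\<lambda>(i, j).
      if i = j then real (degree E i) else if {i, j} \<in> E then -1 else 0)"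

text \<open>Eigenvalues of L, counted with algebraic multiplicity, sorted increasingly;
  lambda_2 is the second smallest one.\<close>
definition lambda2 :: "nat \<Rightarrow> nat set set \<Rightarrow> real" where
  "lambda2 n E = sorted_list_of_multiset (proots (char_poly (laplacian n E))) ! 1"

definition gamma :: "nat \<Rightarrow> nat set set \<Rightarrow> real" where
  "gamma n E = real (card E) / lambda2 n E"

definition avg_step :: "nat set \<Rightarrow> (nat \<Rightarrow> real) \<Rightarrow> (nat \<Rightarrow> real)" where
  "avg_step e v = (\<lambda>k. if k \<in> e then (\<Sum>i\<in>e. v i) / 2 else v k)"

primrec avg_process :: "nat set set \<Rightarrow> (nat \<Rightarrow> real) \<Rightarrow> nat \<Rightarrow> (nat \<Rightarrow> real) pmf" where
  "avg_process E v0 0 = return_pmf v0"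
| "avg_process E v0 (Suc t) =
     bind_pmf (avg_process E v0 t) (\<lambda>v. map_pmf (\<lambda>e. avg_step e v) (pmf_of_set E))"

definition mean_val :: "nat \<Rightarrow> (nat \<Rightarrow> real) \<Rightarrow> real" where
  "mean_val n v = (\<Sum>i<n. v i) / real n"

definition norm1 :: "nat \<Rightarrow> (nat \<Rightarrow> real) \<Rightarrow> real" where
  "norm1 n v = (\<Sum>i<n. \<bar>v i\<bar>)"

definition norm2 :: "nat \<Rightarrow> (nat \<Rightarrow> real) \<Rightarrow> real" where
  "norm2 n v = sqrt (\<Sum>i<n. (v i)\<^sup>2)"

definition exp_dev :: "nat \<Rightarrow> nat set set \<Rightarrow> (nat \<Rightarrow> real) \<Rightarrow> nat \<Rightarrow> real" where
  "exp_dev n E v0 t = measure_pmf.expectation (avg_process E v0 t)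
      (\<lambda>v. norm1 n (\<lambda>i. v i - mean_val n v0))"

end

theory Submission
  imports Defs "HOL-Analysis.Analysis"
begin


definition se :: "nat set \<Rightarrow> (nat \<Rightarrow> real) \<Rightarrow> real" where
  "se e x = (\<Sum>k\<in>e. x k)"
definition Bf :: "nat set set \<Rightarrow> (nat \<Rightarrow> real) \<Rightarrow> (nat \<Rightarrow> real) \<Rightarrow> real" where
  "Bf E x y = (\<Sum>e\<in>E. 2 * (\<Sum>k\<in>e. x k * y k) - se e x * se e y)"
definition Lf :: "nat set set \<Rightarrow> (nat \<Rightarrow> real) \<Rightarrow> nat \<Rightarrow> real" where
  "Lf E x i = (\<Sum>e\<in>{e\<in>E. i \<in> e}. 2 * x i - se e x)"
definition ip :: "nat \<Rightarrow> (nat \<Rightarrow> real) \<Rightarrow> (nat \<Rightarrow> real) \<Rightarrow> real" where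
  "ip n x y = (\<Sum>i<n. x i * y i)"

locale lap =
  fixes n :: nat and E :: "nat set set"
  assumes n2: "n \<ge> 2" and sg: "simple_graph n E" and cg: "connected_graph n E"
begin

lemma E_sub: "e \<in> E \<Longrightarrow> e \<subseteq> {..<n}"
  using sg unfolding simple_graph_def by (meson atLeastLessThan_iff lessThan_iff subset_iff)

lemma E_card: "e \<in> E \<Longrightarrow> card e = 2"
  using sg unfolding simple_graph_def by auto

lemma E_pair: assumes "e \<in> E" obtains a b where "e = {a,b}" "a \<noteq> b" "a < n" "b < n"
proof -
  from E_card[OF assms] obtain a b where "e = {a,b}" "a \<noteq> b" by (meson card_2_iff)
  with E_sub[OF assms] that show ?thesis by auto
qed

lemma finE: "finite E"
proof -
  have "E \<subseteq> Pow {..<n}" using E_sub by auto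
  then show ?thesis by (rule finite_subset) auto
qed

lemma E_ne: "E \<noteq> {}"
proof -
  have "(\<lambda>x y. {x, y} \<in> E)\<^sup>*\<^sup>* 0 1" using cg n2 unfolding connected_graph_def by auto
  then show ?thesis
    by (cases rule: converse_rtranclpE) auto
qed

lemma cardE_pos: "card E > 0"
  using finE E_ne by (simp add: card_gt_0_iff)

lemma se_pair: "a \<noteq> b \<Longrightarrow> se {a,b} x = x a + x b"
  by (simp add: se_def)

lemma ip_L: "ip n y (Lf E x) = Bf E y x"
proof -
  have "ip n y (Lf E x) = (\<Sum>i<n. \<Sum>e\<in>E. if i \<in> e then y i * (2 * x i - se e x) else 0)"
    unfolding ip_def Lf_def
    by (auto simp: sum_distrib_left sum.inter_filter[OF finE] intro!: sum.cong)
  also have "\<dots> = (\<Sum>e\<in>E. \<Sum>i<n. if i \<in> e then y i * (2 * x i - se e x) else 0)"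
    by (rule sum.swap)
  also have "\<dots> = (\<Sum>e\<in>E. \<Sum>i\<in>e. y i * (2 * x i - se e x))"
  proof (rule sum.cong[OF refl])
    fix e assume e: "e \<in> E"
    have "e \<inter> {..<n} = e" using E_sub[OF e] by auto
    then show "(\<Sum>i<n. if i \<in> e then y i * (2 * x i - se e x) else 0) = (\<Sum>i\<in>e. y i * (2 * x i - se e x))"
      by (simp add: sum.If_cases Int_commute)
  qed
  also have "\<dots> = Bf E y x"
    unfolding Bf_def se_def
    by (intro sum.cong refl) (simp add: sum_subtractf sum_distrib_left sum_distrib_right algebra_simps)
  finally show ?thesis .
qed

lemma Bf_sym: "Bf E x y = Bf E y x"
  unfolding Bf_def by (simp add: mult.commute)


lemma Bf_term_eq: assumes "e = {a,b}" "a \<noteq> b"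
  shows "2 * (\<Sum>k\<in>e. x k * y k) - se e x * se e y = (x a - x b) * (y a - y b)"
  using assms by (simp add: se_def algebra_simps)

lemma Bf_nonneg: "Bf E x x \<ge> 0"
  unfolding Bf_def
proof (rule sum_nonneg)
  fix e assume "e \<in> E"
  then obtain a b where "e = {a,b}" "a \<noteq> b" "a < n" "b < n" by (rule E_pair)
  then show "0 \<le> 2 * (\<Sum>k\<in>e. x k * x k) - se e x * se e x"
    using Bf_term_eq[of e a b x x] by simp
qed

lemma Bf_zero: assumes "Bf E x x = 0" shows "\<And>i. i < n \<Longrightarrow> x i = x 0"
proof -
  have terms: "\<And>e. e \<in> E \<Longrightarrow> 2 * (\<Sum>k\<in>e. x k * x k) - se e x * se e x = 0"
  proof -
    fix e assume e: "e \<in> E"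
    have nn: "\<forall>e\<in>E. 0 \<le> 2 * (\<Sum>k\<in>e. x k * x k) - se e x * se e x"
    proof
      fix e assume "e \<in> E"
      then obtain a b where "e = {a,b}" "a \<noteq> b" "a < n" "b < n" by (rule E_pair)
      then show "0 \<le> 2 * (\<Sum>k\<in>e. x k * x k) - se e x * se e x"
        using Bf_term_eq[of e a b x x] by simp
    qed
    have "(\<Sum>e\<in>E. 2 * (\<Sum>k\<in>e. x k * x k) - se e x * se e x) = 0" using assms by (simp add: Bf_def)
    with nn have "\<forall>e\<in>E. 2 * (\<Sum>k\<in>e. x k * x k) - se e x * se e x = 0"
      by (simp add: sum_nonneg_eq_0_iff[OF finE])
    then show "2 * (\<Sum>k\<in>e. x k * x k) - se e x * se e x = 0" using e by blast
  qed
  have edge: "{a,b} \<in> E \<Longrightarrow> x a = x b" for a b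
  proof -
    assume ab: "{a,b} \<in> E"
    have "a \<noteq> b" using E_card[OF ab] by (cases "a = b") auto
    with terms[OF ab] Bf_term_eq[of "{a,b}" a b x x] show ?thesis by simp
  qed
  fix i assume "i < n"
  then have "(\<lambda>x y. {x, y} \<in> E)\<^sup>*\<^sup>* 0 i" using cg n2 unfolding connected_graph_def by auto
  then show "x i = x 0"
    by (induction rule: rtranclp_induct) (auto dest: edge)
qed

lemma Bf_upper: "Bf E x x \<le> 2 * card E * ip n x x"
proof -
  have "Bf E x x \<le> (\<Sum>e\<in>E. 2 * ip n x x)"
    unfolding Bf_def
  proof (rule sum_mono)
    fix e assume e: "e \<in> E"
    have "(\<Sum>k\<in>e. x k * x k) \<le> (\<Sum>k<n. x k * x k)"
      by (rule sum_mono2) (use E_sub[OF e] in auto)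
    moreover have "se e x * se e x \<ge> 0" by simp
    ultimately show "2 * (\<Sum>k\<in>e. x k * x k) - se e x * se e x \<le> 2 * ip n x x"
      unfolding ip_def by linarith
  qed
  then show ?thesis by simp
qed

lemma Bf_add: "Bf E (\<lambda>i. x i + s * y i) (\<lambda>i. x i + s * y i) = Bf E x x + 2 * s * Bf E x y + s^2 * Bf E y y"
proof -
  have "Bf E (\<lambda>i. x i + s * y i) (\<lambda>i. x i + s * y i) =
     (\<Sum>e\<in>E. (2 * (\<Sum>k\<in>e. x k * x k) - se e x * se e x) + 2 * s * (2 * (\<Sum>k\<in>e. x k * y k) - se e x * se e y)
        + s^2 * (2 * (\<Sum>k\<in>e. y k * y k) - se e y * se e y))"
    unfolding Bf_def
  proof (rule sum.cong[OF refl])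
    fix e assume "e \<in> E"
    have "se e (\<lambda>i. x i + s * y i) = se e x + s * se e y"
      by (simp add: se_def sum.distrib sum_distrib_left)
    moreover have "(\<Sum>k\<in>e. (x k + s * y k) * (x k + s * y k)) = (\<Sum>k\<in>e. x k * x k) + 2 * s * (\<Sum>k\<in>e. x k * y k) + s^2 * (\<Sum>k\<in>e. y k * y k)"
      by (simp add: sum.distrib sum_distrib_left algebra_simps power2_eq_square)
    ultimately show "2 * (\<Sum>k\<in>e. (x k + s * y k) * (x k + s * y k)) - se e (\<lambda>i. x i + s * y i) * se e (\<lambda>i. x i + s * y i) =
       (2 * (\<Sum>k\<in>e. x k * x k) - se e x * se e x) + 2 * s * (2 * (\<Sum>k\<in>e. x k * y k) - se e x * se e y)
        + s^2 * (2 * (\<Sum>k\<in>e. y k * y k) - se e y * se e y)"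
      by (simp add: algebra_simps power2_eq_square)
  qed
  also have "\<dots> = Bf E x x + 2 * s * Bf E x y + s^2 * Bf E y y"
    unfolding Bf_def by (simp add: sum.distrib sum_distrib_left)
  finally show ?thesis .
qed

lemma Bf_cong: assumes "\<And>i. i < n \<Longrightarrow> x i = x' i" "\<And>i. i < n \<Longrightarrow> y i = y' i"
  shows "Bf E x y = Bf E x' y'"
  unfolding Bf_def se_def
proof (rule sum.cong[OF refl])
  fix e assume "e \<in> E"
  with E_sub have "\<And>k. k \<in> e \<Longrightarrow> k < n" by auto
  with assms have "(\<Sum>k\<in>e. x k * y k) = (\<Sum>k\<in>e. x' k * y' k)" "(\<Sum>k\<in>e. x k) = (\<Sum>k\<in>e. x' k)"
     "(\<Sum>k\<in>e. y k) = (\<Sum>k\<in>e. y' k)" by (auto intro!: sum.cong)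
  then show "2 * (\<Sum>k\<in>e. x k * y k) - (\<Sum>k\<in>e. x k) * (\<Sum>k\<in>e. y k) =
         2 * (\<Sum>k\<in>e. x' k * y' k) - (\<Sum>k\<in>e. x' k) * (\<Sum>k\<in>e. y' k)" by simp
qed

lemma Bf_scale: "Bf E (\<lambda>i. c * x i) (\<lambda>i. c * x i) = c^2 * Bf E x x"
  unfolding Bf_def se_def
  by (simp add: sum_distrib_left[symmetric] algebra_simps power2_eq_square)
   (simp add: sum_distrib_left algebra_simps)

lemma Lf_cong: assumes "\<And>i. i < n \<Longrightarrow> x i = x' i" "i < n"
  shows "Lf E x i = Lf E x' i"
  unfolding Lf_def se_def
proof (rule sum.cong[OF refl])
  fix e assume "e \<in> {e \<in> E. i \<in> e}"
  with E_sub have "\<And>k. k \<in> e \<Longrightarrow> k < n" by auto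
  with assms show "2 * x i - sum x e = 2 * x' i - sum x' e" by simp
qed

lemma Lf_const: "Lf E (\<lambda>_. c) i = 0"
  unfolding Lf_def se_def by (rule sum.neutral) (auto simp: E_card)

lemma sum_Lf: "(\<Sum>i<n. Lf E x i) = 0"
proof -
  have "(\<Sum>i<n. Lf E x i) = ip n (\<lambda>_. 1) (Lf E x)" by (simp add: ip_def)
  also have "\<dots> = Bf E x (\<lambda>_. 1)" by (simp add: ip_L Bf_sym)
  also have "\<dots> = ip n x (Lf E (\<lambda>_. 1))" by (simp add: ip_L)
  also have "\<dots> = 0" by (simp add: ip_def Lf_const)
  finally show ?thesis .
qed

end



context lap begin

abbreviation "Lm \<equiv> laplacian n E"

lemma Lm_carrier: "Lm \<in> carrier_mat n n"
  by (simp add: laplacian_def)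

lemma Lm_idx: "i < n \<Longrightarrow> j < n \<Longrightarrow> Lm $$ (i,j) = (if i = j then real (degree E i) else if {i,j} \<in> E then -1 else 0)"
  by (simp add: laplacian_def)

definition nb :: "nat \<Rightarrow> nat set" where "nb i = {j. {i,j} \<in> E}"

lemma nb_sub: "i < n \<Longrightarrow> nb i \<subseteq> {..<n} - {i}"
proof
  fix j assume i: "i < n" and j: "j \<in> nb i"
  then have e: "{i,j} \<in> E" by (simp add: nb_def)
  have "j < n" using E_sub[OF e] by auto
  moreover have "j \<noteq> i" using E_card[OF e] by auto
  ultimately show "j \<in> {..<n} - {i}" by auto
qed

lemma nb_fin: "i < n \<Longrightarrow> finite (nb i)"
  using nb_sub by (meson finite_Diff finite_lessThan finite_subset)

lemma nb_sum: assumes i: "i < n"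
  shows "(\<Sum>e\<in>{e\<in>E. i \<in> e}. h e) = (\<Sum>j\<in>nb i. h {i,j})"
proof -
  have img: "{e\<in>E. i \<in> e} = (\<lambda>j. {i,j}) ` nb i"
  proof
    show "{e \<in> E. i \<in> e} \<subseteq> (\<lambda>j. {i, j}) ` nb i"
    proof
      fix e assume "e \<in> {e \<in> E. i \<in> e}"
      then have e: "e \<in> E" "i \<in> e" by auto
      then obtain a b where ab: "e = {a,b}" "a \<noteq> b" by (meson E_pair)
      show "e \<in> (\<lambda>j. {i, j}) ` nb i"
      proof (cases "i = a")
        case True
        then show ?thesis using ab e unfolding nb_def by (auto intro!: image_eqI[of _ _ b])
      next
        case False
        then have "i = b" using ab e by auto
        then show ?thesis using ab e unfolding nb_def by (auto intro!: image_eqI[of _ _ a] simp: insert_commute)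
      qed
    qed
    show "(\<lambda>j. {i, j}) ` nb i \<subseteq> {e \<in> E. i \<in> e}" by (auto simp: nb_def)
  qed
  have inj: "inj_on (\<lambda>j. {i,j}) (nb i)"
    by (auto simp: inj_on_def doubleton_eq_iff)
  show ?thesis unfolding img by (simp add: sum.reindex[OF inj])
qed

lemma Lf_nb: "i < n \<Longrightarrow> Lf E x i = (\<Sum>j\<in>nb i. x i - x j)"
  unfolding Lf_def
  apply (subst nb_sum, assumption)
  apply (rule sum.cong[OF refl])
proof -
  fix j assume "i < n" "j \<in> nb i"
  then have "j \<noteq> i" using nb_sub[of i] by auto
  then show "2 * x i - se {i, j} x = x i - x j" by (simp add: se_def)
qed

lemma degree_nb: "degree E i = card (nb i)"
  by (simp add: degree_def nb_def)

lemma Lm_row: assumes i: "i < n" shows "(\<Sum>j<n. Lm $$ (i,j) * x j) = Lf E x i"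
proof -
  have "(\<Sum>j<n. Lm $$ (i,j) * x j) = Lm $$ (i,i) * x i + (\<Sum>j\<in>{..<n} - {i}. Lm $$ (i,j) * x j)"
    using i by (simp add: sum.remove)
  also have "(\<Sum>j\<in>{..<n} - {i}. Lm $$ (i,j) * x j) = (\<Sum>j\<in>{..<n} - {i}. if j \<in> nb i then - x j else 0)"
    using i by (intro sum.cong refl) (auto simp: Lm_idx nb_def)
  also have "\<dots> = - (\<Sum>j\<in>nb i. x j)"
  proof -
    have "({..<n} - {i}) \<inter> nb i = nb i" "nb i \<inter> ({..<n} - {i}) = nb i" using nb_sub[OF i] by blast+
    then show ?thesis by (simp add: sum.If_cases sum_negf)
  qed
  finally show ?thesis
    using i by (simp add: Lf_nb Lm_idx sum_subtractf degree_nb)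
qed

definition vf :: "real vec \<Rightarrow> nat \<Rightarrow> real" where
  "vf v = (\<lambda>j. if j < n then v $ j else 0)"

lemma Lm_mult_vec: assumes v: "v \<in> carrier_vec n"
  shows "Lm *\<^sub>v v = vec n (\<lambda>i. Lf E (vf v) i)"
proof (rule eq_vecI)
  show "dim_vec (Lm *\<^sub>v v) = dim_vec (vec n (Lf E (vf v)))" using Lm_carrier by simp
  fix i assume "i < dim_vec (vec n (Lf E (vf v)))"
  then have i: "i < n" by simp
  have "(Lm *\<^sub>v v) $ i = (\<Sum>j<n. Lm $$ (i,j) * vf v j)"
    using i v Lm_carrier by (auto simp: scalar_prod_def vf_def lessThan_atLeast0 intro!: sum.cong)
  also have "\<dots> = Lf E (vf v) i" by (rule Lm_row[OF i])
  finally show "(Lm *\<^sub>v v) $ i = vec n (Lf E (vf v)) $ i" using i by simp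
qed

lemma eig_of_fun:
  assumes ev: "\<And>i. i < n \<Longrightarrow> Lf E x i = r * x i" and nz: "i0 < n" "x i0 \<noteq> 0"
  shows "poly (char_poly Lm) r = 0"
proof -
  let ?v = "vec n x"
  have vf: "\<And>i. i < n \<Longrightarrow> vf ?v i = x i" by (simp add: vf_def)
  have "Lm *\<^sub>v ?v = r \<cdot>\<^sub>v ?v"
    unfolding Lm_mult_vec[of ?v, simplified]
  proof (rule eq_vecI)
    fix i assume "i < dim_vec (r \<cdot>\<^sub>v vec n x)"
    then have i: "i < n" by simp
    have "Lf E (vf ?v) i = Lf E x i" by (rule Lf_cong[OF vf i])
    then show "vec n (Lf E (vf (vec n x))) $ i = (r \<cdot>\<^sub>v vec n x) $ i" using i ev by simp
  qed simp
  moreover have "?v \<noteq> 0\<^sub>v n"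
  proof
    assume "?v = 0\<^sub>v n"
    then have "?v $ i0 = 0" using nz by simp
    then show False using nz by simp
  qed
  ultimately have "eigenvector Lm ?v r" unfolding eigenvector_def using Lm_carrier by auto
  then have "eigenvalue Lm r" unfolding eigenvalue_def by auto
  then show ?thesis using eigenvalue_root_char_poly[OF Lm_carrier] by simp
qed

lemma fun_of_eig:
  assumes "poly (char_poly Lm) r = 0"
  obtains x i0 where "\<And>i. i \<ge> n \<Longrightarrow> x i = 0" "i0 < n" "x i0 \<noteq> 0" "\<And>i. i < n \<Longrightarrow> Lf E x i = r * x i"
proof -
  have "eigenvalue Lm r" using eigenvalue_root_char_poly[OF Lm_carrier] assms by simp
  then obtain v where "eigenvector Lm v r" unfolding eigenvalue_def by auto
  then have v: "v \<in> carrier_vec n" "v \<noteq> 0\<^sub>v n" "Lm *\<^sub>v v = r \<cdot>\<^sub>v v"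
    unfolding eigenvector_def using Lm_carrier by auto
  then obtain i0 where i0: "i0 < n" "v $ i0 \<noteq> 0" by (metis eq_vecI carrier_vecD index_zero_vec(1,2))
  show ?thesis
  proof (rule that[of "vf v" i0])
    show "\<And>i. n \<le> i \<Longrightarrow> vf v i = 0" by (simp add: vf_def)
    show "i0 < n" by fact
    show "vf v i0 \<noteq> 0" using i0 by (simp add: vf_def)
    fix i assume i: "i < n"
    have "(Lm *\<^sub>v v) $ i = Lf E (vf v) i" using Lm_mult_vec[OF v(1)] i by simp
    moreover have "(r \<cdot>\<^sub>v v) $ i = r * vf v i" using i v(1) by (simp add: vf_def)
    ultimately show "Lf E (vf v) i = r * vf v i" using v(3) by simp
  qed
qed

end



lemma mm_idx: "A \<in> carrier_mat a b \<Longrightarrow> B \<in> carrier_mat b c \<Longrightarrow> i < a \<Longrightarrow> j < c \<Longrightarrow>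
   (A * B) $$ (i,j) = (\<Sum>k<b. A $$ (i,k) * B $$ (k,j))"
  by (simp add: scalar_prod_def lessThan_atLeast0)
lemma mv_idx: "A \<in> carrier_mat a b \<Longrightarrow> v \<in> carrier_vec b \<Longrightarrow> i < a \<Longrightarrow>
   (A *\<^sub>v v) $ i = (\<Sum>k<b. A $$ (i,k) * v $ k)"
  by (simp add: scalar_prod_def lessThan_atLeast0)

context lap begin

lemma Lm_rowsum: "i < n \<Longrightarrow> (\<Sum>j<n. Lm $$ (i,j)) = 0"
  using Lm_row[of i "\<lambda>_. 1"] by (simp add: Lf_const)

definition "mm = n - 1"
lemma nm: "n = Suc mm" using n2 by (simp add: mm_def)

definition Pm :: "real mat" where "Pm = mat n n (\<lambda>(i,j). if j = 0 \<or> i = j then 1 else 0)"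
definition Qm :: "real mat" where "Qm = mat n n (\<lambda>(i,j). if i = j then 1 else if j = 0 then -1 else 0)"
definition A2m :: "real mat" where "A2m = mat 1 mm (\<lambda>(i,j). Lm $$ (0, Suc j))"
definition A3m :: "real mat" where "A3m = mat mm mm (\<lambda>(i,j). Lm $$ (Suc i, Suc j) - Lm $$ (0, Suc j))"
definition A1m :: "real mat" where "A1m = mat 1 1 (\<lambda>_. 0)"
definition Bm where "Bm = four_block_mat A1m A2m (0\<^sub>m mm 1) A3m"

lemma carriers: "Pm \<in> carrier_mat n n" "Qm \<in> carrier_mat n n" "Bm \<in> carrier_mat n n"
   "A2m \<in> carrier_mat 1 mm" "A3m \<in> carrier_mat mm mm" "A1m \<in> carrier_mat 1 1"
  by (auto simp: Pm_def Qm_def Bm_def A1m_def A2m_def A3m_def nm[symmetric])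

lemma PQ: "Pm * Qm = 1\<^sub>m n"
proof (rule eq_matI)
  fix i j assume ij: "i < dim_row (1\<^sub>m n)" "j < dim_col (1\<^sub>m n)"
  then have i: "i < n" and j: "j < n" by auto
  have "(Pm * Qm) $$ (i,j) = (\<Sum>k<n. Pm $$ (i,k) * Qm $$ (k,j))"
    by (rule mm_idx[OF carriers(1,2) i j])
  also have "\<dots> = (\<Sum>k<n. (if k = 0 \<or> i = k then 1 else 0) * (if k = j then 1 else if j = 0 then -1 else 0))"
    using i j by (intro sum.cong) (auto simp: Pm_def Qm_def)
  also have "\<dots> = (if i = j then 1 else 0)"
  proof (cases "j = 0")
    case True
    have "(\<Sum>k<n. (if k = 0 \<or> i = k then 1 else 0) * (if k = j then 1 else if j = 0 then -1 else 0))
       = (\<Sum>k<n. (if k = 0 then 1 else 0) + (if k = i \<and> i \<noteq> 0 then -1 else (0::real)))"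
      using True by (intro sum.cong) auto
    also have "\<dots> = 1 + (if i \<noteq> 0 then -1 else 0)"
      using i n2 by (simp add: sum.distrib sum.delta)
    finally show ?thesis using True by auto
  next
    case False
    have "(\<Sum>k<n. (if k = 0 \<or> i = k then 1 else 0) * (if k = j then 1 else if j = 0 then -1 else 0))
       = (\<Sum>k<n. if k = j then (if i = j then 1 else 0) else (0::real))"
      using False by (intro sum.cong) auto
    also have "\<dots> = (if i = j then 1 else 0)" using j by (simp add: sum.delta)
    finally show ?thesis .
  qed
  finally show "(Pm * Qm) $$ (i, j) = 1\<^sub>m n $$ (i, j)" using i j by simp
qed (use carriers in auto)

lemma QP: "Qm * Pm = 1\<^sub>m n"
  using mat_mult_left_right_inverse[OF carriers(1,2) PQ] .

lemma Bij: "a < n \<Longrightarrow> b < n \<Longrightarrow> Bm $$ (a,b) = (if a = 0 then (if b = 0 then 0 else Lm $$ (0, b))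
                  else (if b = 0 then 0 else Lm $$ (a, b) - Lm $$ (0, b)))"
proof -
  assume a: "a < n" and b: "b < n"
  have "Bm $$ (a,b) = (if a < 1 then if b < 1 then A1m $$ (a,b) else A2m $$ (a, b - 1)
      else if b < 1 then (0\<^sub>m mm 1) $$ (a - 1, b) else A3m $$ (a - 1, b - 1))"
    unfolding Bm_def using a b carriers by (subst index_mat_four_block) (auto simp: nm[symmetric])
  moreover have "a \<noteq> 0 \<Longrightarrow> a - 1 < mm" "b \<noteq> 0 \<Longrightarrow> b - 1 < mm" using a b nm by linarith+
  ultimately show ?thesis using a b by (auto simp: A1m_def A2m_def A3m_def)
qed

lemma LP: "Lm * Pm = Pm * Bm"
proof (rule eq_matI)
  fix i j assume ij: "i < dim_row (Pm * Bm)" "j < dim_col (Pm * Bm)"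
  then have i: "i < n" and j: "j < n" using carriers by auto
  have "(Lm * Pm) $$ (i,j) = (\<Sum>k<n. Lm $$ (i,k) * Pm $$ (k,j))"
    by (rule mm_idx[OF Lm_carrier carriers(1) i j])
  also have "\<dots> = (\<Sum>k<n. Lm $$ (i,k) * (if j = 0 \<or> k = j then 1 else 0))"
    using j by (intro sum.cong) (auto simp: Pm_def)
  also have "\<dots> = (if j = 0 then 0 else Lm $$ (i,j))"
  proof (cases "j = 0")
    case True then show ?thesis using Lm_rowsum[OF i] by simp
  next
    case False
    have "(\<Sum>k<n. Lm $$ (i,k) * (if j = 0 \<or> k = j then 1 else 0)) = (\<Sum>k<n. if k = j then Lm $$ (i,k) else 0)"
      using False by (intro sum.cong) auto
    then show ?thesis using False j by (simp add: sum.delta)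
  qed
  also have "\<dots> = (Pm * Bm) $$ (i,j)"
  proof -
    have "(Pm * Bm) $$ (i,j) = (\<Sum>k<n. Pm $$ (i,k) * Bm $$ (k,j))"
      by (rule mm_idx[OF carriers(1,3) i j])
    also have "\<dots> = (\<Sum>k<n. (if k = 0 \<or> i = k then 1 else 0) * Bm $$ (k,j))"
      using i by (intro sum.cong) (auto simp: Pm_def)
    also have "\<dots> = (\<Sum>k<n. (if k = 0 then Bm $$ (k,j) else 0) + (if k = i \<and> i \<noteq> 0 then Bm $$ (k,j) else 0))"
      by (intro sum.cong) auto
    also have "\<dots> = Bm $$ (0,j) + (if i \<noteq> 0 then Bm $$ (i,j) else 0)"
      using i n2 by (simp add: sum.distrib sum.delta)
    also have "\<dots> = (if j = 0 then 0 else Lm $$ (i,j))"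
      using i j n2 by (auto simp: Bij)
    finally show ?thesis by simp
  qed
  finally show "(Lm * Pm) $$ (i, j) = (Pm * Bm) $$ (i, j)" .
qed (use carriers Lm_carrier in auto)

lemma cp_split: "char_poly Lm = [:0,1:] * char_poly A3m"
proof -
  have "Lm = Pm * Bm * Qm"
  proof -
    have "Lm = Lm * (Pm * Qm)" using PQ Lm_carrier by simp
    also have "\<dots> = (Lm * Pm) * Qm" using Lm_carrier carriers by (simp add: assoc_mult_mat)
    also have "\<dots> = Pm * Bm * Qm" using LP by simp
    finally show ?thesis .
  qed
  then have "similar_mat_wit Lm Bm Pm Qm"
    unfolding similar_mat_wit_def using Lm_carrier carriers PQ QP by (auto simp: Let_def)
  then have "char_poly Lm = char_poly Bm"
    by (intro char_poly_similar) (auto simp: similar_mat_def)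
  also have "\<dots> = char_poly A1m * char_poly A3m"
    unfolding Bm_def by (rule char_poly_four_block_zeros_col[OF carriers(6,4,5)])
  also have "char_poly A1m = [:0, 1:]"
    by (simp add: A1m_def char_poly_defs det_def sign_def)
  finally show ?thesis .
qed


lemma A3nz: "poly (char_poly A3m) 0 \<noteq> 0"
proof
  assume "poly (char_poly A3m) 0 = 0"
  then have "eigenvalue A3m 0" using eigenvalue_root_char_poly[OF carriers(5)] by simp
  then obtain y where "eigenvector A3m y 0" unfolding eigenvalue_def by auto
  then have y: "y \<in> carrier_vec mm" "y \<noteq> 0\<^sub>v mm" "A3m *\<^sub>v y = 0\<^sub>v mm"
    unfolding eigenvector_def using carriers(5) by auto
  define w where "w = (\<lambda>k. if k = 0 then 0 else if k < n then y $ (k - 1) else (0::real))"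
  have row: "\<And>i. i < n \<Longrightarrow> Lf E w i = (\<Sum>j<mm. Lm $$ (i, Suc j) * y $ j)"
  proof -
    fix i assume i: "i < n"
    have "Lf E w i = (\<Sum>j<n. Lm $$ (i,j) * w j)" using Lm_row[OF i] by simp
    also have "\<dots> = (\<Sum>j<Suc mm. Lm $$ (i,j) * w j)" by (simp only: nm[symmetric])
    also have "\<dots> = (\<Sum>j<mm. Lm $$ (i, Suc j) * w (Suc j))"
      unfolding sum.lessThan_Suc_shift by (simp add: w_def)
    also have "\<dots> = (\<Sum>j<mm. Lm $$ (i, Suc j) * y $ j)"
    proof (intro sum.cong refl)
      fix j assume "j \<in> {..<mm}"
      then have "j < mm" by simp
      then have "Suc j < n" using nm by linarith
      then show "Lm $$ (i, Suc j) * w (Suc j) = Lm $$ (i, Suc j) * y $ j" by (simp add: w_def)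
    qed
    finally show "Lf E w i = (\<Sum>j<mm. Lm $$ (i, Suc j) * y $ j)" .
  qed
  have const: "\<And>i. i < n \<Longrightarrow> Lf E w i = Lf E w 0"
  proof -
    fix i assume i: "i < n"
    show "Lf E w i = Lf E w 0"
    proof (cases i)
      case 0 then show ?thesis by simp
    next
      case (Suc i')
      then have i': "i' < mm" using i nm Suc by linarith
      have "0 = (A3m *\<^sub>v y) $ i'" using y(3) i' by simp
      also have "\<dots> = (\<Sum>j<mm. A3m $$ (i', j) * y $ j)" by (rule mv_idx[OF carriers(5) y(1) i'])
      also have "\<dots> = (\<Sum>j<mm. (Lm $$ (Suc i', Suc j) - Lm $$ (0, Suc j)) * y $ j)"
        using i' by (intro sum.cong) (auto simp: A3m_def)
      also have "\<dots> = Lf E w i - Lf E w 0"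
      proof -
        have r1: "Lf E w i = (\<Sum>j<mm. Lm $$ (Suc i', Suc j) * y $ j)" using row[OF i] Suc by simp
        have r0: "Lf E w 0 = (\<Sum>j<mm. Lm $$ (0, Suc j) * y $ j)" using row[of 0] n2 by simp
        show ?thesis unfolding r1 r0 by (simp add: left_diff_distrib sum_subtractf)
      qed
      finally show ?thesis by simp
    qed
  qed
  have "0 = (\<Sum>i<n. Lf E w i)" using sum_Lf by simp
  also have "\<dots> = (\<Sum>i<n. Lf E w 0)" by (rule sum.cong[OF refl const]) simp
  also have "\<dots> = real n * Lf E w 0" by simp
  finally have w0: "Lf E w 0 = 0" using n2 by simp
  have L0: "\<And>i. i < n \<Longrightarrow> Lf E w i = 0"
  proof -
    fix i assume "i < n"
    from const[OF this] w0 show "Lf E w i = 0" by simp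
  qed
  have "Bf E w w = ip n w (Lf E w)" by (simp add: ip_L)
  also have "\<dots> = 0" unfolding ip_def using L0 by simp
  finally have wc: "\<And>i. i < n \<Longrightarrow> w i = w 0" by (rule Bf_zero)
  have "\<And>j. j < mm \<Longrightarrow> y $ j = 0"
  proof -
    fix j assume j: "j < mm"
    then have sj: "Suc j < n" using nm by linarith
    have "w (Suc j) = w 0" using wc[OF sj] .
    then show "y $ j = 0" using sj by (simp add: w_def)
  qed
  then have "y = 0\<^sub>v mm" using y(1) by (intro eq_vecI) auto
  with y(2) show False by simp
qed

lemma order0: "order 0 (char_poly Lm) = 1"
proof -
  have "char_poly A3m \<noteq> 0" using A3nz by auto
  then have "order 0 (char_poly Lm) = order 0 [:0,1::real:] + order 0 (char_poly A3m)"
    unfolding cp_split by (intro order_mult) simp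
  also have "order 0 (char_poly A3m) = 0" using A3nz order_root by blast
  also have "order 0 [:0,1::real:] = 1" using order_linear[of "0::real"] by simp
  finally show ?thesis by simp
qed

end



lemma quad_zero:
  fixes a b :: real
  assumes h: "\<And>s. 0 \<le> a * s + b * s^2"
  shows "a = 0"
proof -
  define t where "t = \<bar>b\<bar> + 1"
  have t: "t > 0" "b - t \<le> -1" unfolding t_def by auto
  define s where "s = - a / t"
  have "a * s + b * s^2 = a^2 * (b - t) / t^2"
    using t by (simp add: s_def field_simps power2_eq_square)
  moreover have "a^2 * (b - t) \<le> a^2 * (-1)"
    using t by (intro mult_left_mono) auto
  ultimately have "0 \<le> -(a^2) / t^2" using h[of s] t
    by (smt (verit, ccfv_SIG) divide_right_mono zero_le_power2)
  then have "a^2 \<le> 0" using t by (simp add: divide_le_0_iff)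
  then show ?thesis by simp
qed

lemma second_elem:
  fixes xs :: "real list"
  assumes s: "sorted xs" and c0: "count (mset xs) 0 = 1" and mu: "\<mu> \<in> set xs" "\<mu> > 0"
    and r: "\<forall>r\<in>set xs. r = 0 \<or> \<mu> \<le> r"
  shows "xs ! 1 = \<mu>"
proof -
  have z: "0 \<in> set xs" using c0 by (metis count_eq_zero_iff set_mset_mset zero_neq_one)
  obtain a b rest where xs: "xs = a # b # rest"
  proof (cases xs)
    case Nil then show ?thesis using z by simp
  next
    case (Cons a ys)
    show ?thesis
    proof (cases ys)
      case Nil
      then have "xs = [a]" using Cons by simp
      then show ?thesis using z mu by auto
    next
      case (Cons b rest)
      then show ?thesis using \<open>xs = a # ys\<close> that by simp
    qed
  qed
  have nonneg: "\<forall>r\<in>set xs. r \<ge> 0" using r mu by force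
  have ab: "a \<le> b" "\<forall>x\<in>set rest. b \<le> x" using s xs by auto
  have a0: "a = 0"
  proof -
    have "a \<le> 0" using z xs s ab by auto
    then show ?thesis using nonneg xs by auto
  qed
  have "b \<noteq> 0"
  proof
    assume "b = 0"
    then have "count (mset xs) 0 \<ge> 2" using xs a0 by simp
    then show False using c0 by simp
  qed
  then have "b \<ge> \<mu>" using r xs by auto
  moreover have "b \<le> \<mu>" using mu xs a0 ab by auto
  ultimately show ?thesis using xs by simp
qed

context lap begin

definition Kset :: "(nat \<Rightarrow> real) set" where
  "Kset = {x. (\<forall>i. n \<le> i \<longrightarrow> x i = 0) \<and> (\<Sum>i<n. (x i)^2) = 1 \<and> (\<Sum>i<n. x i) = 0}"

lemma cont_coord: "continuous_on UNIV (\<lambda>x::nat \<Rightarrow> real. x i)"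
  by (rule continuous_on_product_coordinates)

lemma Kset_compact: "compact Kset"
proof -
  define Bx :: "(nat \<Rightarrow> real) set" where "Bx = Pi\<^sub>E UNIV (\<lambda>i. if i < n then {-1..1} else {0})"
  have "compactin (product_topology (\<lambda>i. euclidean) UNIV) Bx"
    unfolding Bx_def compactin_PiE by (auto simp: compactin_euclidean_iff)
  then have cB: "compact Bx" by (simp add: euclidean_product_topology compactin_euclidean_iff)
  have cl: "closed Kset"
  proof -
    have c1: "closed {x::nat\<Rightarrow>real. \<forall>i. n \<le> i \<longrightarrow> x i = 0}"
    proof -
      have "{x::nat\<Rightarrow>real. \<forall>i. n \<le> i \<longrightarrow> x i = 0} = (\<Inter>i\<in>{n..}. {x. x i = 0})" by auto
      moreover have "closed {x::nat\<Rightarrow>real. x i = 0}" for i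
        by (rule closed_Collect_eq) (auto intro: cont_coord)
      ultimately show ?thesis by auto
    qed
    have c2: "closed {x::nat\<Rightarrow>real. (\<Sum>i<n. (x i)^2) = 1}"
      by (rule closed_Collect_eq) (auto intro!: continuous_intros cont_coord)
    have c3: "closed {x::nat\<Rightarrow>real. (\<Sum>i<n. x i) = 0}"
      by (rule closed_Collect_eq) (auto intro!: continuous_intros cont_coord)
    have "Kset = {x::nat\<Rightarrow>real. \<forall>i. n \<le> i \<longrightarrow> x i = 0} \<inter> {x. (\<Sum>i<n. (x i)^2) = 1} \<inter> {x. (\<Sum>i<n. x i) = 0}"
      by (auto simp: Kset_def)
    then show ?thesis using c1 c2 c3 by auto
  qed
  have sub: "Kset \<subseteq> Bx"
  proof
    fix x assume x: "x \<in> Kset"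
    have "\<bar>x i\<bar> \<le> 1" if i: "i < n" for i
    proof -
      have "(x i)^2 \<le> (\<Sum>j<n. (x j)^2)"
        by (rule member_le_sum) (use i in auto)
      then have "(x i)^2 \<le> 1" using x by (simp add: Kset_def)
      then show ?thesis by (simp add: abs_square_le_1)
    qed
    then show "x \<in> Bx" using x unfolding Bx_def Kset_def by (auto simp: abs_le_iff)
  qed
  have "Kset = Bx \<inter> Kset" using sub by auto
  then show ?thesis using compact_Int_closed[OF cB cl] by simp
qed

lemma Kset_ne: "Kset \<noteq> {}"
proof -
  define x :: "nat \<Rightarrow> real" where "x = (\<lambda>i. if i = 0 then 1 / sqrt 2 else if i = 1 then - 1 / sqrt 2 else 0)"
  have "(\<Sum>i<n. (x i)^2) = (\<Sum>i<n. (if i = 0 then 1/2 else 0) + (if i = 1 then 1/2 else 0))"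
    by (intro sum.cong) (auto simp: x_def power_divide)
  also have "\<dots> = 1" using n2 by (simp add: sum.distrib)
  finally have s2: "(\<Sum>i<n. (x i)^2) = 1" .
  have "(\<Sum>i<n. x i) = (\<Sum>i<n. (if i = 0 then 1 / sqrt 2 else 0) + (if i = 1 then - 1 / sqrt 2 else 0))"
    by (intro sum.cong) (auto simp: x_def)
  also have "\<dots> = 0" using n2 by (simp add: sum.distrib)
  finally have s1: "(\<Sum>i<n. x i) = 0" .
  have "x \<in> Kset" unfolding Kset_def using s1 s2 n2 by (auto simp: x_def)
  then show ?thesis by auto
qed

lemma Bf_cont: "continuous_on UNIV (\<lambda>x. Bf E x x)"
  unfolding Bf_def se_def by (auto intro!: continuous_intros cont_coord)

definition uvec :: "nat \<Rightarrow> real" where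
  "uvec = (SOME u. u \<in> Kset \<and> (\<forall>y\<in>Kset. Bf E u u \<le> Bf E y y))"

lemma uvec: "uvec \<in> Kset" "\<And>y. y \<in> Kset \<Longrightarrow> Bf E uvec uvec \<le> Bf E y y"
proof -
  have "\<exists>u\<in>Kset. \<forall>y\<in>Kset. Bf E u u \<le> Bf E y y"
    by (rule continuous_attains_inf[OF Kset_compact Kset_ne]) (rule continuous_on_subset[OF Bf_cont], auto)
  then have "uvec \<in> Kset \<and> (\<forall>y\<in>Kset. Bf E uvec uvec \<le> Bf E y y)"
    unfolding uvec_def by (rule someI2_bex) auto
  then show "uvec \<in> Kset" "\<And>y. y \<in> Kset \<Longrightarrow> Bf E uvec uvec \<le> Bf E y y" by auto
qed

definition "mu = Bf E uvec uvec"

lemma uvec_props: "\<And>i. n \<le> i \<Longrightarrow> uvec i = 0" "ip n uvec uvec = 1" "(\<Sum>i<n. uvec i) = 0"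
  using uvec(1) by (auto simp: Kset_def ip_def power2_eq_square)

lemma minR: assumes s0: "(\<Sum>i<n. x i) = 0" shows "mu * ip n x x \<le> Bf E x x"
proof (cases "ip n x x = 0")
  case True
  then show ?thesis using Bf_nonneg[of x] by simp
next
  case False
  define N where "N = ip n x x"
  have "N \<ge> 0" unfolding N_def ip_def by (intro sum_nonneg) simp
  then have Npos: "N > 0" using False unfolding N_def by linarith
  define c where "c = 1 / sqrt N"
  define x' where "x' = (\<lambda>i. if i < n then c * x i else 0)"
  have "(\<Sum>i<n. (x' i)^2) = c^2 * N"
    unfolding N_def ip_def x'_def by (simp add: sum_distrib_left power2_eq_square algebra_simps)
  also have "\<dots> = 1" using Npos by (simp add: c_def power_divide)
  finally have "(\<Sum>i<n. (x' i)^2) = 1" .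
  moreover have "(\<Sum>i<n. x' i) = 0" unfolding x'_def using s0 by (simp add: sum_distrib_left[symmetric])
  ultimately have "x' \<in> Kset" unfolding Kset_def by (auto simp: x'_def)
  then have "mu \<le> Bf E x' x'" using uvec(2) by (simp add: mu_def)
  also have "Bf E x' x' = Bf E (\<lambda>i. c * x i) (\<lambda>i. c * x i)" by (rule Bf_cong) (auto simp: x'_def)
  also have "\<dots> = c^2 * Bf E x x" by (rule Bf_scale)
  also have "\<dots> = Bf E x x / N" using Npos by (simp add: c_def power_divide)
  finally show ?thesis using Npos by (simp add: N_def[symmetric] pos_le_divide_eq mult.commute)
qed

lemma mu_pos: "mu > 0"
proof -
  have "mu \<ge> 0" unfolding mu_def by (rule Bf_nonneg)
  moreover have "mu \<noteq> 0"
  proof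
    assume "mu = 0"
    then have c: "\<And>i. i < n \<Longrightarrow> uvec i = uvec 0" using Bf_zero[of uvec] unfolding mu_def by blast
    have "(\<Sum>i<n. uvec i) = (\<Sum>i<n. uvec 0)" by (rule sum.cong[OF refl c]) simp
    then have "(\<Sum>i<n. uvec i) = real n * uvec 0" by simp
    then have u0: "uvec 0 = 0" using uvec_props(3) n2 by simp
    have "ip n uvec uvec = (\<Sum>i<n. uvec 0 * uvec 0)" unfolding ip_def by (rule sum.cong[OF refl]) (metis c lessThan_iff)
    then have "ip n uvec uvec = 0" using u0 by simp
    then show False using uvec_props(2) by simp
  qed
  ultimately show ?thesis by simp
qed

lemma mu_le: "mu \<le> 2 * card E"
  using Bf_upper[of uvec] uvec_props(2) by (simp add: mu_def)

lemma ip_add: "ip n (\<lambda>i. x i + s * y i) (\<lambda>i. x i + s * y i) = ip n x x + 2 * s * ip n x y + s^2 * ip n y y"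
  unfolding ip_def by (simp add: sum.distrib sum_distrib_left algebra_simps power2_eq_square)

lemma uvec_eig: "\<And>i. i < n \<Longrightarrow> Lf E uvec i = mu * uvec i"
proof -
  have step1: "Bf E uvec y = mu * ip n uvec y" if y0: "(\<Sum>i<n. y i) = 0" for y
  proof -
    have "0 \<le> (2 * (Bf E uvec y - mu * ip n uvec y)) * s + (Bf E y y - mu * ip n y y) * s^2" for s
    proof -
      have "(\<Sum>i<n. uvec i + s * y i) = 0" using y0 uvec_props(3) by (simp add: sum.distrib sum_distrib_left[symmetric])
      then have "mu * ip n (\<lambda>i. uvec i + s * y i) (\<lambda>i. uvec i + s * y i) \<le> Bf E (\<lambda>i. uvec i + s * y i) (\<lambda>i. uvec i + s * y i)"
        by (rule minR)
      then show ?thesis unfolding ip_add Bf_add using uvec_props(2) by (simp add: mu_def algebra_simps)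
    qed
    then have "2 * (Bf E uvec y - mu * ip n uvec y) = 0" by (rule quad_zero)
    then show ?thesis by simp
  qed
  define w where "w = (\<lambda>i. if i < n then Lf E uvec i - mu * uvec i else 0)"
  have "(\<Sum>i<n. w i) = (\<Sum>i<n. Lf E uvec i) - mu * (\<Sum>i<n. uvec i)"
    by (simp add: w_def sum_subtractf sum_distrib_left)
  also have "\<dots> = 0" using sum_Lf uvec_props(3) by simp
  finally have "Bf E uvec w = mu * ip n uvec w" by (rule step1)
  moreover have "Bf E uvec w = ip n w (Lf E uvec)" by (simp add: ip_L Bf_sym)
  moreover have "ip n uvec w = ip n w uvec" by (simp add: ip_def mult.commute)
  ultimately have "ip n w (Lf E uvec) - mu * ip n w uvec = 0" by simp
  moreover have "ip n w (Lf E uvec) - mu * ip n w uvec = (\<Sum>i<n. (w i)^2)"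
    unfolding ip_def by (simp add: w_def sum_subtractf sum_distrib_left power2_eq_square algebra_simps sum.distrib)
  ultimately have "(\<Sum>i<n. (w i)^2) = 0" by simp
  then have "\<forall>i\<in>{..<n}. (w i)^2 = 0" by (subst sum_nonneg_eq_0_iff[symmetric]) auto
  then show "\<And>i. i < n \<Longrightarrow> Lf E uvec i = mu * uvec i" by (auto simp: w_def)
qed

lemma mu_root: "poly (char_poly Lm) mu = 0"
proof -
  obtain i0 where "i0 < n" "uvec i0 \<noteq> 0"
  proof (rule ccontr)
    assume "\<not> thesis"
    then have "\<And>i. i < n \<Longrightarrow> uvec i = 0" using that by blast
    then have "ip n uvec uvec = 0" by (simp add: ip_def)
    then show False using uvec_props(2) by simp
  qed
  then show ?thesis using eig_of_fun[OF uvec_eig] by blast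
qed

lemma root_class: assumes "poly (char_poly Lm) r = 0" shows "r = 0 \<or> mu \<le> r"
proof -
  obtain x i0 where x: "\<And>i. i \<ge> n \<Longrightarrow> x i = 0" "i0 < n" "x i0 \<noteq> 0" "\<And>i. i < n \<Longrightarrow> Lf E x i = r * x i"
    using fun_of_eig[OF assms] by metis
  have Npos: "ip n x x > 0"
  proof -
    have "(x i0)^2 \<le> ip n x x" unfolding ip_def power2_eq_square by (rule member_le_sum) (use x(2) in auto)
    moreover have "(x i0)^2 > 0" using x(3) by simp
    ultimately show ?thesis by linarith
  qed
  have B: "Bf E x x = r * ip n x x"
    unfolding ip_L[symmetric] unfolding ip_def using x(4) by (simp add: sum_distrib_left algebra_simps)
  show ?thesis
  proof (cases "r = 0")
    case False
    have "r * (\<Sum>i<n. x i) = (\<Sum>i<n. Lf E x i)" using x(4) by (simp add: sum_distrib_left)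
    then have "(\<Sum>i<n. x i) = 0" using False sum_Lf by simp
    then have "mu * ip n x x \<le> r * ip n x x" using minR[of x] B by simp
    then show ?thesis using Npos by simp
  qed simp
qed

lemma lambda2_eq: "lambda2 n E = mu"
proof -
  let ?p = "char_poly Lm"
  have p0: "?p \<noteq> 0" using degree_monic_char_poly[OF Lm_carrier] by auto
  define xs where "xs = sorted_list_of_multiset (proots ?p)"
  have mx: "mset xs = proots ?p" unfolding xs_def by simp
  have "sorted xs" unfolding xs_def by simp
  moreover have "count (mset xs) 0 = 1" unfolding mx using count_proots[OF p0] order0 by simp
  moreover have "mu \<in> set xs"
  proof -
    have "mu \<in># proots ?p" using mu_root p0 by simp
    then show ?thesis by (metis mx set_mset_mset)
  qed
  moreover have "\<forall>r\<in>set xs. r = 0 \<or> mu \<le> r"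
  proof
    fix r assume "r \<in> set xs"
    then have "r \<in># proots ?p" by (metis mx set_mset_mset)
    then have "poly ?p r = 0" using p0 by simp
    then show "r = 0 \<or> mu \<le> r" by (rule root_class)
  qed
  ultimately have "xs ! 1 = mu" using second_elem mu_pos by blast
  then show ?thesis unfolding lambda2_def xs_def .
qed

end



lemma exp_sum: "finite (set_pmf p) \<Longrightarrow> measure_pmf.expectation p (f :: 'a \<Rightarrow> real) = (\<Sum>a\<in>set_pmf p. f a * pmf p a)"
  by (rule integral_measure_pmf_real) auto

lemma exp_mono: assumes "finite (set_pmf p)" "\<And>x. x \<in> set_pmf p \<Longrightarrow> (f :: 'a \<Rightarrow> real) x \<le> g x"
  shows "measure_pmf.expectation p f \<le> measure_pmf.expectation p g"
  unfolding exp_sum[OF assms(1)] by (intro sum_mono mult_right_mono) (auto simp: assms)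

lemma exp_add: "finite (set_pmf p) \<Longrightarrow> measure_pmf.expectation p (\<lambda>x. f x + g x) =
   measure_pmf.expectation p f + measure_pmf.expectation p (g :: 'a \<Rightarrow> real)"
  by (simp add: exp_sum sum.distrib algebra_simps)

lemma exp_diff: "finite (set_pmf p) \<Longrightarrow> measure_pmf.expectation p (\<lambda>x. f x - g x) =
   measure_pmf.expectation p f - measure_pmf.expectation p (g :: 'a \<Rightarrow> real)"
  by (simp add: exp_sum sum_subtractf algebra_simps)

lemma exp_cmult: "finite (set_pmf p) \<Longrightarrow> measure_pmf.expectation p (\<lambda>x. c * f x) =
   c * measure_pmf.expectation p (f :: 'a \<Rightarrow> real)"
  by (simp add: exp_sum sum_distrib_left algebra_simps)

lemma exp_const: "finite (set_pmf p) \<Longrightarrow> measure_pmf.expectation p (\<lambda>x. c) = (c::real)"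
  by (simp add: exp_sum sum_distrib_left[symmetric] sum_pmf_eq_1 mult.commute)

lemma exp_setsum: "finite (set_pmf p) \<Longrightarrow> finite I \<Longrightarrow> measure_pmf.expectation p (\<lambda>x. \<Sum>i\<in>I. f i x) =
   (\<Sum>i\<in>I. measure_pmf.expectation p (f i :: 'a \<Rightarrow> real))"
  by (simp add: exp_sum sum_distrib_right sum.swap[of _ I])

lemma exp_sq: assumes fin: "finite (set_pmf p)"
  shows "(measure_pmf.expectation p Y)^2 \<le> measure_pmf.expectation p (\<lambda>x. (Y x)^2 :: real)"
proof -
  define m where "m = measure_pmf.expectation p Y"
  have "0 \<le> measure_pmf.expectation p (\<lambda>x. (Y x - m)^2)"
    unfolding exp_sum[OF fin] by (intro sum_nonneg) simp
  also have "measure_pmf.expectation p (\<lambda>x. (Y x - m)^2) =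
      measure_pmf.expectation p (\<lambda>x. (Y x)^2) - 2 * m * measure_pmf.expectation p Y + m^2"
  proof -
    have "(\<lambda>x. (Y x - m)^2) = (\<lambda>x. ((Y x)^2 + (-2 * m) * Y x) + m^2)"
      by (auto simp: power2_eq_square algebra_simps)
    then show ?thesis using fin by (simp add: exp_add exp_diff exp_cmult exp_const)
  qed
  finally show ?thesis by (simp add: m_def power2_eq_square)
qed

lemma exp_bind:
  assumes fin: "finite (set_pmf p)" and fin2: "\<And>x. x \<in> set_pmf p \<Longrightarrow> finite (set_pmf (f x))"
  shows "measure_pmf.expectation (bind_pmf p f) (g :: 'b \<Rightarrow> real) =
         measure_pmf.expectation p (\<lambda>x. measure_pmf.expectation (f x) g)"
proof -
  define A where "A = (\<Union>x\<in>set_pmf p. set_pmf (f x))"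
  have finA: "finite A" unfolding A_def using fin fin2 by auto
  have sb: "set_pmf (bind_pmf p f) = A" unfolding A_def by (simp add: set_bind_pmf)
  have pb: "pmf (bind_pmf p f) a = (\<Sum>x\<in>set_pmf p. pmf (f x) a * pmf p x)" for a
    unfolding pmf_bind by (rule exp_sum[OF fin])
  have "measure_pmf.expectation (bind_pmf p f) g = (\<Sum>a\<in>A. g a * pmf (bind_pmf p f) a)"
    using exp_sum[of "bind_pmf p f" g] finA sb by simp
  also have "\<dots> = (\<Sum>a\<in>A. \<Sum>x\<in>set_pmf p. g a * pmf (f x) a * pmf p x)"
    by (simp add: pb sum_distrib_left mult.assoc)
  also have "\<dots> = (\<Sum>x\<in>set_pmf p. \<Sum>a\<in>A. g a * pmf (f x) a * pmf p x)"
    by (rule sum.swap)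
  also have "\<dots> = (\<Sum>x\<in>set_pmf p. measure_pmf.expectation (f x) g * pmf p x)"
  proof (rule sum.cong[OF refl])
    fix x assume x: "x \<in> set_pmf p"
    have "measure_pmf.expectation (f x) g = (\<Sum>a\<in>A. g a * pmf (f x) a)"
      by (rule integral_measure_pmf_real[OF finA]) (use x in \<open>auto simp: A_def\<close>)
    then show "(\<Sum>a\<in>A. g a * pmf (f x) a * pmf p x) = measure_pmf.expectation (f x) g * pmf p x"
      by (simp add: sum_distrib_right)
  qed
  also have "\<dots> = measure_pmf.expectation p (\<lambda>x. measure_pmf.expectation (f x) g)"
    by (rule exp_sum[OF fin, symmetric])
  finally show ?thesis .
qed

context lap begin

lemma fin_proc: "finite (set_pmf (avg_process E v0 t))"
proof (induction t)
  case 0 then show ?case by simp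
next
  case (Suc t)
  then show ?case using finE E_ne by (simp add: set_bind_pmf set_pmf_of_set)
qed

lemma exp_succ: "measure_pmf.expectation (avg_process E v0 (Suc t)) g =
   measure_pmf.expectation (avg_process E v0 t) (\<lambda>v. (\<Sum>e\<in>E. g (avg_step e v)) / card E)"
  unfolding avg_process.simps
  by (subst exp_bind) (use fin_proc finE E_ne in \<open>auto simp: set_pmf_of_set integral_pmf_of_set\<close>)

lemma avg_sum: assumes e: "e \<in> E" shows "(\<Sum>i<n. avg_step e v i) = (\<Sum>i<n. v i)"
proof -
  have sub: "e \<subseteq> {..<n}" by (rule E_sub[OF e])
  have "(\<Sum>i<n. avg_step e v i) = (\<Sum>i\<in>{..<n} - e. avg_step e v i) + (\<Sum>i\<in>e. avg_step e v i)"
    by (rule sum.subset_diff[OF sub]) simp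
  also have "(\<Sum>i\<in>{..<n} - e. avg_step e v i) = (\<Sum>i\<in>{..<n} - e. v i)"
    by (intro sum.cong) (auto simp: avg_step_def)
  also have "(\<Sum>i\<in>e. avg_step e v i) = (\<Sum>i\<in>e. v i)"
    using E_card[OF e] by (simp add: avg_step_def)
  also have "(\<Sum>i\<in>{..<n} - e. v i) + (\<Sum>i\<in>e. v i) = (\<Sum>i<n. v i)"
    by (rule sum.subset_diff[OF sub, symmetric]) simp
  finally show ?thesis .
qed

lemma sum_pres: "v \<in> set_pmf (avg_process E v0 t) \<Longrightarrow> (\<Sum>i<n. v i) = (\<Sum>i<n. v0 i)"
proof (induction t arbitrary: v)
  case 0 then show ?case by simp
next
  case (Suc t)
  then obtain w e where "w \<in> set_pmf (avg_process E v0 t)" "e \<in> E" "v = avg_step e w"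
    using finE E_ne by (auto simp: set_bind_pmf set_pmf_of_set)
  then show ?case using Suc.IH avg_sum by simp
qed

definition Phi :: "real \<Rightarrow> (nat \<Rightarrow> real) \<Rightarrow> real" where
  "Phi a v = (\<Sum>i<n. (v i - a)^2)"

lemma Phi_step: assumes e: "e \<in> E"
  shows "Phi a (avg_step e v) = Phi a v - (2 * (\<Sum>k\<in>e. (v k - a) * (v k - a)) - se e (\<lambda>k. v k - a) * se e (\<lambda>k. v k - a)) / 2"
proof -
  obtain p q where pq: "e = {p,q}" "p \<noteq> q" "p < n" "q < n" using E_pair[OF e] by metis
  have sub: "e \<subseteq> {..<n}" by (rule E_sub[OF e])
  have split: "\<And>f. (\<Sum>i<n. f i) = (\<Sum>i\<in>{..<n} - e. f i) + (\<Sum>i\<in>e. f i)"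
    by (rule sum.subset_diff[OF sub]) simp
  have "Phi a (avg_step e v) = (\<Sum>i\<in>{..<n} - e. (v i - a)^2) + (\<Sum>i\<in>e. ((v p + v q) / 2 - a)^2)"
    unfolding Phi_def split[of "\<lambda>i. (avg_step e v i - a)^2"]
    by (intro arg_cong2[where f = "(+)"] sum.cong) (auto simp: avg_step_def pq)
  also have "(\<Sum>i\<in>e. ((v p + v q) / 2 - a)^2) = 2 * ((v p + v q) / 2 - a)^2"
    using pq by simp
  finally have "Phi a (avg_step e v) = (\<Sum>i\<in>{..<n} - e. (v i - a)^2) + 2 * ((v p + v q) / 2 - a)^2" .
  moreover have "Phi a v = (\<Sum>i\<in>{..<n} - e. (v i - a)^2) + ((v p - a)^2 + (v q - a)^2)"
    unfolding Phi_def split[of "\<lambda>i. (v i - a)^2"] using pq by simp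
  ultimately show ?thesis using pq by (simp add: se_def power2_eq_square field_simps)
qed

lemma Phi_avg: "(\<Sum>e\<in>E. Phi a (avg_step e v)) = card E * Phi a v - Bf E (\<lambda>k. v k - a) (\<lambda>k. v k - a) / 2"
  unfolding Bf_def by (simp add: Phi_step sum_subtractf sum_divide_distrib[symmetric])

definition "cc = 1 - mu / (2 * card E)"

lemma cc_bounds: "0 \<le> cc" "cc \<le> 1"
  using mu_le mu_pos cardE_pos by (auto simp: cc_def field_simps)

lemma Phi_nonneg: "Phi a v \<ge> 0"
  unfolding Phi_def by (intro sum_nonneg) simp

lemma Phi_decay: "measure_pmf.expectation (avg_process E v0 t) (Phi (mean_val n v0)) \<le> cc ^ t * Phi (mean_val n v0) v0"
proof (induction t)
  case 0 then show ?case by simp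
next
  case (Suc t)
  let ?a = "mean_val n v0"
  let ?p = "avg_process E v0 t"
  have "measure_pmf.expectation (avg_process E v0 (Suc t)) (Phi ?a) =
        measure_pmf.expectation ?p (\<lambda>v. (\<Sum>e\<in>E. Phi ?a (avg_step e v)) / card E)"
    by (rule exp_succ)
  also have "\<dots> \<le> measure_pmf.expectation ?p (\<lambda>v. cc * Phi ?a v)"
  proof (rule exp_mono[OF fin_proc])
    fix v assume v: "v \<in> set_pmf ?p"
    let ?x = "\<lambda>k. v k - ?a"
    have "(\<Sum>i<n. ?x i) = (\<Sum>i<n. v i) - n * ?a" by (simp add: sum_subtractf)
    also have "\<dots> = 0" using sum_pres[OF v] n2 by (simp add: mean_val_def)
    finally have "mu * ip n ?x ?x \<le> Bf E ?x ?x" by (rule minR)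
    moreover have "ip n ?x ?x = Phi ?a v" by (simp add: ip_def Phi_def power2_eq_square)
    ultimately have "(\<Sum>e\<in>E. Phi ?a (avg_step e v)) \<le> card E * Phi ?a v - mu * Phi ?a v / 2"
      unfolding Phi_avg by simp
    moreover have eq: "cc * Phi ?a v = (card E * Phi ?a v - mu * Phi ?a v / 2) / card E"
      using cardE_pos by (simp add: cc_def field_simps)
    ultimately show "(\<Sum>e\<in>E. Phi ?a (avg_step e v)) / card E \<le> cc * Phi ?a v"
      unfolding eq by (intro divide_right_mono) auto
  qed
  also have "\<dots> = cc * measure_pmf.expectation ?p (Phi ?a)" by (rule exp_cmult[OF fin_proc])
  also have "\<dots> \<le> cc * (cc ^ t * Phi ?a v0)" using Suc.IH cc_bounds by (intro mult_left_mono) auto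
  finally show ?case by simp
qed

lemma norm1_le: "norm1 n x \<le> sqrt (real n) * sqrt (\<Sum>i<n. (x i)^2)"
proof -
  have "(norm1 n x)^2 \<le> (\<Sum>i<n. (\<bar>x i\<bar>)^2) * real (card {..<n})"
    unfolding norm1_def by (rule sum_squared_le_sum_of_squares)
  then have "(norm1 n x)^2 \<le> real n * (\<Sum>i<n. (x i)^2)" by (simp add: mult.commute)
  then have "sqrt ((norm1 n x)^2) \<le> sqrt (real n * (\<Sum>i<n. (x i)^2))" by (rule real_sqrt_le_mono)
  moreover have "norm1 n x \<ge> 0" unfolding norm1_def by (intro sum_nonneg) simp
  ultimately show ?thesis by (simp add: real_sqrt_mult)
qed

lemma part1: "exp_dev n E v0 t \<le> sqrt cc ^ t * sqrt (real n) * norm2 n (\<lambda>i. v0 i - mean_val n v0)"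
proof -
  let ?a = "mean_val n v0"
  let ?p = "avg_process E v0 t"
  have "exp_dev n E v0 t \<le> measure_pmf.expectation ?p (\<lambda>v. sqrt (real n) * sqrt (Phi ?a v))"
    unfolding exp_dev_def by (rule exp_mono[OF fin_proc]) (simp add: norm1_le Phi_def)
  also have "\<dots> = sqrt (real n) * measure_pmf.expectation ?p (\<lambda>v. sqrt (Phi ?a v))"
    by (rule exp_cmult[OF fin_proc])
  also have "measure_pmf.expectation ?p (\<lambda>v. sqrt (Phi ?a v)) \<le> sqrt (cc ^ t * Phi ?a v0)"
  proof -
    have "(measure_pmf.expectation ?p (\<lambda>v. sqrt (Phi ?a v)))^2 \<le> measure_pmf.expectation ?p (\<lambda>v. (sqrt (Phi ?a v))^2)"
      by (rule exp_sq[OF fin_proc])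
    also have "measure_pmf.expectation ?p (\<lambda>v. (sqrt (Phi ?a v))^2) = measure_pmf.expectation ?p (Phi ?a)"
      using Phi_nonneg by simp
    also have "\<dots> \<le> cc ^ t * Phi ?a v0" by (rule Phi_decay)
    finally have "(measure_pmf.expectation ?p (\<lambda>v. sqrt (Phi ?a v)))^2 \<le> cc ^ t * Phi ?a v0" .
    then show ?thesis using real_le_rsqrt by blast
  qed
  then have "sqrt (real n) * measure_pmf.expectation ?p (\<lambda>v. sqrt (Phi ?a v)) \<le> sqrt (real n) * sqrt (cc ^ t * Phi ?a v0)"
    by (intro mult_left_mono) auto
  also have "\<dots> = sqrt cc ^ t * sqrt (real n) * norm2 n (\<lambda>i. v0 i - ?a)"
    by (simp add: norm2_def Phi_def real_sqrt_mult real_sqrt_power)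
  finally show ?thesis .
qed

end



lemma exp_abs: "finite (set_pmf p) \<Longrightarrow> \<bar>measure_pmf.expectation p (f :: 'a \<Rightarrow> real)\<bar> \<le> measure_pmf.expectation p (\<lambda>x. \<bar>f x\<bar>)"
  unfolding exp_sum
  by (rule order_trans[OF sum_abs]) (simp add: abs_mult)

context lap begin

lemma avg_sum_E: fixes v :: "nat \<Rightarrow> real" assumes i: "i < n" shows "(\<Sum>e\<in>E. avg_step e v i) = card E * v i - Lf E v i / 2"
proof -
  have "(\<Sum>e\<in>E. avg_step e v i) = (\<Sum>e\<in>E. v i + (if i \<in> e then se e v / 2 - v i else 0))"
    by (intro sum.cong) (auto simp: avg_step_def se_def)
  also have "\<dots> = card E * v i + (\<Sum>e\<in>{e\<in>E. i \<in> e}. se e v / 2 - v i)"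
    by (simp add: sum.distrib sum.inter_filter[OF finE])
  also have "(\<Sum>e\<in>{e\<in>E. i \<in> e}. se e v / 2 - v i) = - Lf E v i / 2"
  proof -
    have "(\<Sum>e\<in>{e\<in>E. i \<in> e}. se e v / 2 - v i) = (\<Sum>e\<in>{e\<in>E. i \<in> e}. - ((2 * v i - se e v) / 2))"
      by (intro sum.cong) (auto simp: field_simps)
    also have "\<dots> = - Lf E v i / 2" unfolding Lf_def by (simp add: sum_negf sum_divide_distrib)
    finally show ?thesis .
  qed
  finally show ?thesis by simp
qed

lemma Lf_lin: "Lf E (\<lambda>k. c * x k) i = c * Lf E x i"
proof -
  have "\<And>e. 2 * (c * x i) - (\<Sum>k\<in>e. c * x k) = c * (2 * x i - (\<Sum>k\<in>e. x k))"
    by (simp add: sum_distrib_left right_diff_distrib)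
  then show ?thesis unfolding Lf_def se_def by (simp add: sum_distrib_left)
qed

lemma exp_Lf: assumes fin: "finite (set_pmf p)"
  shows "measure_pmf.expectation p (\<lambda>v. Lf E v i) = Lf E (\<lambda>k. measure_pmf.expectation p (\<lambda>v. v k)) i"
proof -
  have fS: "finite {e\<in>E. i \<in> e}" using finE by simp
  have "measure_pmf.expectation p (\<lambda>v. Lf E v i) = (\<Sum>e\<in>{e\<in>E. i \<in> e}. measure_pmf.expectation p (\<lambda>v. 2 * v i - se e v))"
    unfolding Lf_def by (rule exp_setsum[OF fin fS])
  also have "\<dots> = Lf E (\<lambda>k. measure_pmf.expectation p (\<lambda>v. v k)) i"
    unfolding Lf_def
  proof (rule sum.cong[OF refl])
    fix e assume e: "e \<in> {e\<in>E. i \<in> e}"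
    have fe: "finite e" using E_card e by (metis card.infinite mem_Collect_eq zero_neq_numeral)
    have "measure_pmf.expectation p (\<lambda>v. 2 * v i - se e v) = 2 * measure_pmf.expectation p (\<lambda>v. v i) - measure_pmf.expectation p (se e)"
      by (simp add: exp_diff[OF fin] exp_cmult[OF fin])
    also have "measure_pmf.expectation p (se e) = se e (\<lambda>k. measure_pmf.expectation p (\<lambda>v. v k))"
      unfolding se_def by (rule exp_setsum[OF fin fe])
    finally show "measure_pmf.expectation p (\<lambda>v. 2 * v i - se e v) = 2 * measure_pmf.expectation p (\<lambda>v. v i) - se e (\<lambda>k. measure_pmf.expectation p (\<lambda>v. v k))" .
  qed
  finally show ?thesis .
qed

lemma mean_evolve: "i < n \<Longrightarrow> measure_pmf.expectation (avg_process E uvec t) (\<lambda>v. v i) = cc ^ t * uvec i"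
proof (induction t arbitrary: i)
  case 0 then show ?case by simp
next
  case (Suc t)
  let ?p = "avg_process E uvec t"
  have "measure_pmf.expectation (avg_process E uvec (Suc t)) (\<lambda>v. v i) =
        measure_pmf.expectation ?p (\<lambda>v. (\<Sum>e\<in>E. avg_step e v i) / card E)"
    by (rule exp_succ)
  also have "\<dots> = measure_pmf.expectation ?p (\<lambda>v. v i - (1 / (2 * card E)) * Lf E v i)"
    using cardE_pos by (intro arg_cong[where f = "measure_pmf.expectation ?p"] ext) (simp add: avg_sum_E[OF Suc.prems] field_simps)
  also have "\<dots> = measure_pmf.expectation ?p (\<lambda>v. v i) - (1 / (2 * card E)) * measure_pmf.expectation ?p (\<lambda>v. Lf E v i)"
    by (simp add: exp_diff[OF fin_proc] exp_cmult[OF fin_proc])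
  also have "measure_pmf.expectation ?p (\<lambda>v. Lf E v i) = Lf E (\<lambda>k. cc ^ t * uvec k) i"
    unfolding exp_Lf[OF fin_proc] by (rule Lf_cong[OF Suc.IH Suc.prems])
  also have "\<dots> = cc ^ t * (mu * uvec i)"
    unfolding Lf_lin uvec_eig[OF Suc.prems] ..
  finally show ?case using Suc.IH[OF Suc.prems] cardE_pos by (simp add: cc_def field_simps)
qed

lemma sum_abs_ge1: "(\<Sum>i<n. \<bar>uvec i\<bar>) \<ge> 1"
proof -
  define S where "S = (\<Sum>i<n. \<bar>uvec i\<bar>)"
  have S0: "S \<ge> 0" unfolding S_def by (intro sum_nonneg) simp
  have "1 = (\<Sum>i<n. \<bar>uvec i\<bar> * \<bar>uvec i\<bar>)" using uvec_props(2) by (simp add: ip_def)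
  also have "\<dots> \<le> (\<Sum>i<n. \<bar>uvec i\<bar> * S)"
  proof (rule sum_mono)
    fix i assume "i \<in> {..<n}"
    then have "\<bar>uvec i\<bar> \<le> S" unfolding S_def by (intro member_le_sum) auto
    then show "\<bar>uvec i\<bar> * \<bar>uvec i\<bar> \<le> \<bar>uvec i\<bar> * S" by (intro mult_left_mono) auto
  qed
  also have "\<dots> = S * S" by (simp add: S_def sum_distrib_right)
  finally have "1 \<le> S * S" .
  then show ?thesis using S0 unfolding S_def[symmetric]
    using abs_square_less_1[of S] by (simp add: power2_eq_square)
qed

lemma part2: "cc ^ t \<le> exp_dev n E uvec t"
proof -
  let ?p = "avg_process E uvec t"
  have m0: "mean_val n uvec = 0" using uvec_props(3) by (simp add: mean_val_def)
  have "exp_dev n E uvec t = (\<Sum>i<n. measure_pmf.expectation ?p (\<lambda>v. \<bar>v i\<bar>))"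
    unfolding exp_dev_def norm1_def m0 by (simp add: exp_setsum[OF fin_proc])
  also have "\<dots> \<ge> (\<Sum>i<n. \<bar>measure_pmf.expectation ?p (\<lambda>v. v i)\<bar>)"
    by (intro sum_mono exp_abs[OF fin_proc])
  also have "(\<Sum>i<n. \<bar>measure_pmf.expectation ?p (\<lambda>v. v i)\<bar>) = cc ^ t * (\<Sum>i<n. \<bar>uvec i\<bar>)"
    using cc_bounds by (simp add: mean_evolve abs_mult sum_distrib_left)
  also have "cc ^ t * (\<Sum>i<n. \<bar>uvec i\<bar>) \<ge> cc ^ t * 1"
    using sum_abs_ge1 cc_bounds by (intro mult_left_mono) auto
  finally show ?thesis by simp
qed

lemma norm2_centered: "norm2 n (\<lambda>i. w i - mean_val n w) \<le> norm2 n w"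
proof -
  define m where "m = mean_val n w"
  have sw: "(\<Sum>i<n. w i) = n * m" using n2 by (simp add: m_def mean_val_def)
  have "(\<Sum>i<n. (w i - m)^2) = (\<Sum>i<n. (w i)^2) - 2 * m * (\<Sum>i<n. w i) + n * m^2"
    by (simp add: power2_eq_square algebra_simps sum.distrib sum_subtractf sum_distrib_left)
  also have "\<dots> = (\<Sum>i<n. (w i)^2) - n * m^2" using sw by (simp add: power2_eq_square)
  also have "\<dots> \<le> (\<Sum>i<n. (w i)^2)" by simp
  finally show ?thesis unfolding norm2_def m_def[symmetric] by (rule real_sqrt_le_mono)
qed

lemma bdd: "bdd_above ((\<lambda>w. exp_dev n E w t) ` {w. norm2 n w = 1})"
proof (rule bdd_aboveI2)
  fix w assume w: "w \<in> {w. norm2 n w = 1}"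
  have "exp_dev n E w t \<le> sqrt cc ^ t * sqrt (real n) * norm2 n (\<lambda>i. w i - mean_val n w)" by (rule part1)
  also have "\<dots> \<le> 1 * sqrt (real n) * 1"
  proof (intro mult_mono)
    show "sqrt cc ^ t \<le> 1" using cc_bounds by (simp add: power_le_one)
    show "norm2 n (\<lambda>i. w i - mean_val n w) \<le> 1" using norm2_centered[of w] w by simp
  qed (auto simp: norm2_def intro!: sum_nonneg)
  finally show "exp_dev n E w t \<le> sqrt (real n)" by simp
qed

lemma uvec_norm: "norm2 n uvec = 1"
  using uvec_props(2) by (simp add: norm2_def ip_def power2_eq_square)

lemma cc_gamma: "1 - 1 / (2 * gamma n E) = cc"
  unfolding gamma_def lambda2_eq cc_def using mu_pos cardE_pos by (simp add: field_simps)

end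

theorem proposition9:
  fixes n :: nat and E :: "nat set set" and v0 :: "nat \<Rightarrow> real" and t :: nat
  assumes "n \<ge> 2" and "simple_graph n E" and "connected_graph n E"
  shows "exp_dev n E v0 t
           \<le> sqrt (1 - 1 / (2 * gamma n E)) ^ t * sqrt (real n)
               * norm2 n (\<lambda>i. v0 i - mean_val n v0)
         \<and> (SUP w \<in> {w. norm2 n w = 1}. exp_dev n E w t) \<ge> (1 - 1 / (2 * gamma n E)) ^ t"
proof -
  interpret lap n E using assms by unfold_locales
  have "(1 - 1 / (2 * gamma n E)) ^ t \<le> exp_dev n E uvec t"
    unfolding cc_gamma by (rule part2)
  also have "\<dots> \<le> (SUP w \<in> {w. norm2 n w = 1}. exp_dev n E w t)"
    by (rule cSUP_upper[OF _ bdd]) (simp add: uvec_norm)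
  finally show ?thesis unfolding cc_gamma using part1 by simp
qed


end
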